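(* Let $1\le j\le d$ and let $\bm{x}_1,\dots,\bm{x}_{j+1}\in\mathbb{R}^d$ be affinely independent points (the vertices of a nondegenerate $j$-simplex). Let $d_{st}^2=\|\bm{x}_s-\bm{x}_t\|^2$, and let $\hat{B}$ be the $(j+2)\times(j+2)$ Cayley–Menger matrix $$\hat{B}=\begin{bmatrix}0 & 1 & 1 & \cdots & 1\\ 1 & 0 & d_{12}^2 & \cdots & d_{1,j+1}^2\\ 1 & d_{21}^2 & 0 & \cdots & d_{2,j+1}^2\\ \vdots & \vdots & \vdots & \ddots & \vdots\\ 1 & d_{j+1,1}^2 & d_{j+1,2}^2 & \cdots & 0\end{bmatrix}.$$ Let $\gamma=j!\,C$, where $C=\sqrt{\frac{(-1)^{j+1}}{2^j (j!)^2}\det(\hat{B})}$ is the $j$-dimensional content of the simplex. Then for each $p\in\{1,\dots,j+1\}$, $$\frac{\partial \gamma}{\partial \bm{x}_p}=\frac{(-1)^{j+1}/2^j}{\gamma}\sum_{\substack{m=1\\ m\neq p}}^{j+1}A_{pm}\,\bm{D}_{pm},$$ where $\bm{D}_{pm}=2(\bm{x}_p-\bm{x}_m)$ and $A_{pm}$ is the entry in the $(p+1)$-th row and $(m+1)$-th column of the adjugate matrix $\mathrm{adj}(\hat{B})$.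
   Context: $\gamma$ is called the content distortion factor: the ratio of the content (volume) of the $j$-simplex to the content $1/j!$ of the unit orthogonal $j$-simplex. Rows and columns of $\hat B$ are indexed $1,\dots,j+2$, with the first row/column being the border of ones, and row/column $s+1$ corresponding to vertex $\bm{x}_s$. The derivative with respect to $\bm{x}_p\in\mathbb{R}^d$ is the gradient vector in $\mathbb{R}^d$. *)

theory Defs
  imports "HOL-Analysis.Analysis" "Jordan_Normal_Form.Determinant"
begin

text \<open>Cayley-Menger matrix of the points x 1, ..., x (j+1): (j+2) x (j+2), 0-indexed;
  row/column 0 is the border, row/column s (1 \<le> s \<le> j+1) corresponds to vertex x s.\<close>
definition cm_matrix :: "nat \<Rightarrow> (nat \<Rightarrow> 'a::euclidean_space) \<Rightarrow> real Matrix.mat" where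
  "cm_matrix j x = Matrix.mat (j+2) (j+2)
     (\<lambda>(r,c). if r = c then 0 else if r = 0 \<or> c = 0 then 1 else (dist (x r) (x c))\<^sup>2)"

definition simplex_content :: "nat \<Rightarrow> (nat \<Rightarrow> 'a::euclidean_space) \<Rightarrow> real" where
  "simplex_content j x =
     sqrt ((-1) ^ (j+1) / (2 ^ j * (fact j)\<^sup>2) * Determinant.det (cm_matrix j x))"

definition distortion :: "nat \<Rightarrow> (nat \<Rightarrow> 'a::euclidean_space) \<Rightarrow> real" where
  "distortion j x = fact j * simplex_content j x"

end

theory Submission
  imports Defs
begin


lemma mat_delete_row_replace:
  assumes "A \<in> carrier_mat n n" "B \<in> carrier_mat n n"
    and "\<And>r c. r < n \<Longrightarrow> c < n \<Longrightarrow> r \<noteq> i \<Longrightarrow> A $$ (r,c) = B $$ (r,c)"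
  shows "mat_delete A i j = mat_delete B i j"
  using assms unfolding mat_delete_def
  by (intro eq_matI) auto

lemma det_has_derivative:
  fixes Mf :: "'a::real_normed_vector \<Rightarrow> real Matrix.mat"
  assumes car: "\<And>y. Mf y \<in> carrier_mat n n"
  and der: "\<And>r c. r < n \<Longrightarrow> c < n \<Longrightarrow> ((\<lambda>y. Mf y $$ (r,c)) has_derivative e' r c) (at z)"
  shows "((\<lambda>y. Determinant.det (Mf y)) has_derivative
     (\<lambda>h. \<Sum>r<n. \<Sum>c<n. e' r c h * cofactor (Mf z) r c)) (at z)"
proof -
  let ?P = "{\<sigma>. \<sigma> permutes {0..<n}}"
  have 1: "((\<lambda>y. Determinant.det (Mf y)) has_derivative (\<lambda>h. \<Sum>\<sigma>\<in>?P. signof \<sigma> *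
     (\<Sum>i\<in>{0..<n}. e' i (\<sigma> i) h * (\<Prod>k\<in>{0..<n}-{i}. Mf z $$ (k, \<sigma> k))))) (at z)"
    unfolding det_def'[OF car]
    by (intro has_derivative_sum has_derivative_mult_right has_derivative_prod der)
      (auto dest: permutes_in_image)
  have 2: "(\<Sum>\<sigma>\<in>?P. signof \<sigma> *
     (\<Sum>i\<in>{0..<n}. e' i (\<sigma> i) h * (\<Prod>k\<in>{0..<n}-{i}. Mf z $$ (k, \<sigma> k))))
     = (\<Sum>r<n. \<Sum>c<n. e' r c h * cofactor (Mf z) r c)" for h
  proof -
    define R where "R i = Matrix.mat n n (\<lambda>(r,c). if r = i then e' i c h else Mf z $$ (r,c))" for i
    have Rc: "R i \<in> carrier_mat n n" for i unfolding R_def by auto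
    have a: "Determinant.det (R i) = (\<Sum>\<sigma>\<in>?P. signof \<sigma> *
       (e' i (\<sigma> i) h * (\<Prod>k\<in>{0..<n}-{i}. Mf z $$ (k, \<sigma> k))))" if i: "i < n" for i
      unfolding det_def'[OF Rc]
    proof (rule sum.cong[OF refl])
      fix \<sigma> assume "\<sigma> \<in> ?P"
      hence s: "\<And>k. k < n \<Longrightarrow> \<sigma> k < n" by (auto dest: permutes_in_image)
      have "(\<Prod>k = 0..<n. R i $$ (k, \<sigma> k)) = R i $$ (i, \<sigma> i) * (\<Prod>k\<in>{0..<n}-{i}. R i $$ (k, \<sigma> k))"
        using i by (subst prod.remove[of _ i]) auto
      also have "\<dots> = e' i (\<sigma> i) h * (\<Prod>k\<in>{0..<n}-{i}. Mf z $$ (k, \<sigma> k))"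
        using i s by (auto simp: R_def intro!: prod.cong)
      finally show "signof \<sigma> * (\<Prod>k = 0..<n. R i $$ (k, \<sigma> k)) = signof \<sigma> *
       (e' i (\<sigma> i) h * (\<Prod>k\<in>{0..<n}-{i}. Mf z $$ (k, \<sigma> k)))" by simp
    qed
    have b: "Determinant.det (R i) = (\<Sum>c<n. e' i c h * cofactor (Mf z) i c)" if i: "i < n" for i
    proof -
      have "Determinant.det (R i) = (\<Sum>c<n. R i $$ (i,c) * cofactor (R i) i c)"
        by (rule laplace_expansion_row[OF Rc i])
      also have "\<dots> = (\<Sum>c<n. e' i c h * cofactor (Mf z) i c)"
      proof (rule sum.cong[OF refl])
        fix c assume c: "c \<in> {..<n}"
        have "mat_delete (R i) i c = mat_delete (Mf z) i c"
          by (rule mat_delete_row_replace[OF Rc car]) (auto simp: R_def)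
        thus "R i $$ (i,c) * cofactor (R i) i c = e' i c h * cofactor (Mf z) i c"
          using c i by (simp add: R_def cofactor_def)
      qed
      finally show ?thesis .
    qed
    have "(\<Sum>\<sigma>\<in>?P. signof \<sigma> *
     (\<Sum>i\<in>{0..<n}. e' i (\<sigma> i) h * (\<Prod>k\<in>{0..<n}-{i}. Mf z $$ (k, \<sigma> k))))
      = (\<Sum>i\<in>{0..<n}. \<Sum>\<sigma>\<in>?P. signof \<sigma> *
       (e' i (\<sigma> i) h * (\<Prod>k\<in>{0..<n}-{i}. Mf z $$ (k, \<sigma> k))))"
      by (simp add: sum_distrib_left sum.swap[of _ ?P])
    also have "\<dots> = (\<Sum>i\<in>{0..<n}. Determinant.det (R i))"
      using a by (intro sum.cong) auto
    also have "\<dots> = (\<Sum>r<n. \<Sum>c<n. e' r c h * cofactor (Mf z) r c)"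
      using b by (auto simp: atLeast0LessThan intro!: sum.cong)
    finally show ?thesis .
  qed
  show ?thesis using 1 unfolding 2 .
qed



lemma dist_sq_has_derivative:
  fixes a z :: "'a::real_inner"
  shows "((\<lambda>y. (dist y a)\<^sup>2) has_derivative (\<lambda>h. 2 * ((z - a) \<bullet> h))) (at z)"
proof -
  have "((\<lambda>y. (y - a) \<bullet> (y - a)) has_derivative (\<lambda>h. (z - a) \<bullet> h + h \<bullet> (z - a))) (at z)"
    by (intro derivative_eq_intros) auto
  moreover have "(\<lambda>y. (dist y a)\<^sup>2) = (\<lambda>y. (y - a) \<bullet> (y - a))"
    by (auto simp: dist_norm power2_norm_eq_inner)
  moreover have "(\<lambda>h. (z - a) \<bullet> h + h \<bullet> (z - a)) = (\<lambda>h. 2 * ((z - a) \<bullet> h))"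
    by (auto simp: inner_commute)
  ultimately show ?thesis by simp
qed

lemma cm_carrier: "cm_matrix j x \<in> carrier_mat (j+2) (j+2)"
  unfolding cm_matrix_def by auto

lemma cm_entry: "r < j+2 \<Longrightarrow> c < j+2 \<Longrightarrow> cm_matrix j x $$ (r,c) =
  (if r = c then 0 else if r = 0 \<or> c = 0 then 1 else (dist (x r) (x c))\<^sup>2)"
  unfolding cm_matrix_def by auto

lemma cm_sym: "transpose_mat (cm_matrix j x) = cm_matrix j x"
  by (rule eq_matI) (auto simp: cm_matrix_def dist_commute)

lemma cofactor_sym:
  assumes "A \<in> carrier_mat n n" "transpose_mat A = A"
  shows "cofactor A i k = cofactor A k i"
proof -
  have "mat_delete (transpose_mat A) k i = transpose_mat (mat_delete A i k)"
    using assms(1) unfolding mat_delete_def by (intro eq_matI) auto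
  moreover have "Determinant.det (transpose_mat (mat_delete A i k)) = Determinant.det (mat_delete A i k)"
    using assms(1) by (intro det_transpose) (auto simp: mat_delete_def)
  ultimately show ?thesis using assms(2) unfolding cofactor_def by (metis add.commute)
qed

lemma cm_entry_deriv:
  fixes x :: "nat \<Rightarrow> 'a::euclidean_space"
  assumes r: "r < j+2" and c: "c < j+2" and p: "p \<in> {1..j+1}"
  shows "((\<lambda>y. cm_matrix j (x(p := y)) $$ (r,c)) has_derivative
     (\<lambda>h. (if r = p \<and> c \<in> {1..j+1} - {p} then 2 * ((x p - x c) \<bullet> h) else 0)
        + (if c = p \<and> r \<in> {1..j+1} - {p} then 2 * ((x p - x r) \<bullet> h) else 0))) (at (x p))"
proof -
  consider "r = c \<or> r = 0 \<or> c = 0" | "r \<noteq> c" "r \<noteq> 0" "c \<noteq> 0" "r = p"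
    | "r \<noteq> c" "r \<noteq> 0" "c \<noteq> 0" "c = p" | "r \<noteq> c" "r \<noteq> 0" "c \<noteq> 0" "r \<noteq> p" "c \<noteq> p"
    by blast
  thus ?thesis
  proof cases
    case 1
    hence "(\<lambda>y. cm_matrix j (x(p := y)) $$ (r,c)) = (\<lambda>y. if r = c then 0 else 1)"
      using r c by (auto simp: cm_entry)
    moreover have "(\<lambda>h. (if r = p \<and> c \<in> {1..j+1} - {p} then 2 * ((x p - x c) \<bullet> h) else 0)
        + (if c = p \<and> r \<in> {1..j+1} - {p} then 2 * ((x p - x r) \<bullet> h) else 0)) = (\<lambda>h. 0)"
      using 1 p by auto
    ultimately show ?thesis by simp
  next
    case 2
    hence "(\<lambda>y. cm_matrix j (x(p := y)) $$ (r,c)) = (\<lambda>y. (dist y (x c))\<^sup>2)"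
      using r c by (auto simp: cm_entry)
    moreover have "(\<lambda>h. (if r = p \<and> c \<in> {1..j+1} - {p} then 2 * ((x p - x c) \<bullet> h) else 0)
        + (if c = p \<and> r \<in> {1..j+1} - {p} then 2 * ((x p - x r) \<bullet> h) else 0))
       = (\<lambda>h. 2 * ((x p - x c) \<bullet> h))"
      using 2 c by auto
    ultimately show ?thesis using dist_sq_has_derivative by metis
  next
    case 3
    hence "(\<lambda>y. cm_matrix j (x(p := y)) $$ (r,c)) = (\<lambda>y. (dist y (x r))\<^sup>2)"
      using r c by (auto simp: cm_entry dist_commute)
    moreover have "(\<lambda>h. (if r = p \<and> c \<in> {1..j+1} - {p} then 2 * ((x p - x c) \<bullet> h) else 0)
        + (if c = p \<and> r \<in> {1..j+1} - {p} then 2 * ((x p - x r) \<bullet> h) else 0))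
       = (\<lambda>h. 2 * ((x p - x r) \<bullet> h))"
      using 3 r by auto
    ultimately show ?thesis using dist_sq_has_derivative by metis
  next
    case 4
    hence "(\<lambda>y. cm_matrix j (x(p := y)) $$ (r,c)) = (\<lambda>y. (dist (x r) (x c))\<^sup>2)"
      using r c by (auto simp: cm_entry)
    moreover have "(\<lambda>h. (if r = p \<and> c \<in> {1..j+1} - {p} then 2 * ((x p - x c) \<bullet> h) else 0)
        + (if c = p \<and> r \<in> {1..j+1} - {p} then 2 * ((x p - x r) \<bullet> h) else 0)) = (\<lambda>h. 0)"
      using 4 by auto
    ultimately show ?thesis by simp
  qed
qed

lemma double_sum_delta:
  fixes g :: "nat \<Rightarrow> real"
  assumes "p < n" "S \<subseteq> {..<n}"
  shows "(\<Sum>r<n. \<Sum>c<n. (if r = p \<and> c \<in> S then g c else 0)) = (\<Sum>c\<in>S. g c)"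
proof -
  have "(\<Sum>r<n. \<Sum>c<n. (if r = p \<and> c \<in> S then g c else 0)) = (\<Sum>c<n. (if c \<in> S then g c else 0))"
  proof -
    have "\<And>r. (\<Sum>c<n. (if r = p \<and> c \<in> S then g c else 0)) =
       (if r = p then (\<Sum>c<n. (if c \<in> S then g c else 0)) else 0)" by auto
    thus ?thesis using assms(1) by simp
  qed
  also have "\<dots> = (\<Sum>c\<in>S. g c)"
    using assms(2) by (simp add: sum.If_cases) (metis Int_absorb1 Int_commute)
  finally show ?thesis .
qed



definition gram :: "nat \<Rightarrow> (nat \<Rightarrow> 'a::real_inner) \<Rightarrow> real Matrix.mat" where
  "gram k v = Matrix.mat k k (\<lambda>(a,b). v a \<bullet> v b)"

definition indep :: "nat \<Rightarrow> (nat \<Rightarrow> 'a::real_vector) \<Rightarrow> bool" where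
  "indep k v = (\<forall>z. (\<Sum>a<k. z a *\<^sub>R v a) = 0 \<longrightarrow> (\<forall>a<k. z a = 0))"

lemma triple_entry:
  fixes A B C :: "real Matrix.mat"
  assumes "A \<in> carrier_mat n n" "B \<in> carrier_mat n n" "C \<in> carrier_mat n n" "r < n" "s < n"
  shows "(A * B * transpose_mat C) $$ (r,s) = (\<Sum>a<n. A $$ (r,a) * (\<Sum>b<n. B $$ (a,b) * C $$ (s,b)))"
proof -
  show ?thesis
    using assms by (simp add: scalar_prod_def atLeast0LessThan)
qed

lemma gram_change:
  fixes w v :: "nat \<Rightarrow> 'a::real_inner"
  assumes T: "T \<in> carrier_mat k k" and vw: "\<And>r. r < k \<Longrightarrow> v r = (\<Sum>a<k. T $$ (r,a) *\<^sub>R w a)"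
  shows "gram k v = T * gram k w * transpose_mat T"
proof (rule eq_matI)
  fix r s assume r: "r < dim_row (T * gram k w * transpose_mat T)" and s: "s < dim_col (T * gram k w * transpose_mat T)"
  hence rs: "r < k" "s < k" using T by auto
  have "(T * gram k w * transpose_mat T) $$ (r,s) = (\<Sum>a<k. T $$ (r,a) * (\<Sum>b<k. (w a \<bullet> w b) * T $$ (s,b)))"
    using rs by (subst triple_entry[OF T _ T]) (auto simp: gram_def)
  also have "\<dots> = v r \<bullet> v s"
    using rs by (simp add: vw inner_sum_left inner_sum_right sum_distrib_left mult_ac) (rule sum.swap)
  finally show "gram k v $$ (r,s) = (T * gram k w * transpose_mat T) $$ (r,s)"
    using rs by (simp add: gram_def)
qed (use T in \<open>auto simp: gram_def\<close>)

lemma span_image_sum: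
  assumes "y \<in> span (f ` A)" and fin: "finite A"
  shows "\<exists>c. y = (\<Sum>a\<in>A. c a *\<^sub>R f a)"
  using assms
proof (induction rule: span_induct_alt)
  case base
  show ?case by (rule exI[of _ "\<lambda>_. 0"]) simp
next
  case (step cc x y)
  then obtain a0 c where a0: "a0 \<in> A" "x = f a0" and y: "y = (\<Sum>a\<in>A. c a *\<^sub>R f a)" by auto
  show ?case
    proof (rule exI[of _ "\<lambda>a. c a + (if a = a0 then cc else 0)"])
      show "cc *\<^sub>R x + y = (\<Sum>a\<in>A. (c a + (if a = a0 then cc else 0)) *\<^sub>R f a)"
        using fin a0 y by (simp add: scaleR_add_left sum.distrib if_distrib[of "\<lambda>t. t *\<^sub>R _"] cong: if_cong)
    qed
qed

lemma indep_mono: "indep (Suc k) v \<Longrightarrow> indep k v"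
  unfolding indep_def
proof (intro allI impI)
  fix z a assume h: "\<forall>z. (\<Sum>a<Suc k. z a *\<^sub>R v a) = 0 \<longrightarrow> (\<forall>a<Suc k. z a = 0)"
    and s: "(\<Sum>a<k. z a *\<^sub>R v a) = 0" and a: "a < k"
  have "(\<Sum>a<Suc k. (z(k := 0)) a *\<^sub>R v a) = (\<Sum>a<k. (z(k := 0)) a *\<^sub>R v a)" by simp
  also have "\<dots> = (\<Sum>a<k. z a *\<^sub>R v a)" by (rule sum.cong) auto
  finally have zz: "(\<Sum>a<Suc k. (z(k := 0)) a *\<^sub>R v a) = 0" using s by simp
  have "(z(k := 0)) a = 0" using h[rule_format, OF zz, of a] a by simp
  thus "z a = 0" using a by simp
qed

lemma gram_pos:
  fixes v :: "nat \<Rightarrow> 'a::euclidean_space"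
  shows "indep k v \<Longrightarrow> Determinant.det (gram k v) > 0"
proof (induction k arbitrary: v)
  case 0
  show ?case by (simp add: gram_def)
next
  case (Suc k)
  have IH: "Determinant.det (gram k v) > 0" using Suc.IH[OF indep_mono[OF Suc.prems]] .
  obtain y u where y: "y \<in> span (v ` {..<k})" and u: "\<And>w. w \<in> span (v ` {..<k}) \<Longrightarrow> Linear_Algebra.orthogonal u w"
    and vk: "v k = y + u"
    by (rule orthogonal_subspace_decomp_exists[where S = "v ` {..<k}" and x = "v k"]) blast
  obtain c where c: "y = (\<Sum>a<k. c a *\<^sub>R v a)" using span_image_sum[OF y] by blast
  have uorth: "u \<bullet> v a = 0" if "a < k" for a
    using u[of "v a"] that by (auto simp: Linear_Algebra.orthogonal_def span_base)
  have u0: "u \<noteq> 0"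
  proof
    assume "u = 0"
    define z where "z a = (if a = k then 1 else - c a)" for a
    have "(\<Sum>a<Suc k. z a *\<^sub>R v a) = v k - (\<Sum>a<k. c a *\<^sub>R v a)"
      by (simp add: z_def sum_negf)
    also have "\<dots> = 0" using vk c \<open>u = 0\<close> by simp
    finally have "z k = 0" using Suc.prems unfolding indep_def by blast
    thus False by (simp add: z_def)
  qed
  define w where "w = v(k := u)"
  define T where "T = Matrix.mat (Suc k) (Suc k) (\<lambda>(r,a). if r = a then 1 else if r = k then c a else (0::real))"
  have Tc: "T \<in> carrier_mat (Suc k) (Suc k)" unfolding T_def by auto
  have vw: "v r = (\<Sum>a<Suc k. T $$ (r,a) *\<^sub>R w a)" if r: "r < Suc k" for r
  proof (cases "r = k")
    case True
    have "(\<Sum>a<Suc k. T $$ (r,a) *\<^sub>R w a) = (\<Sum>a<k. c a *\<^sub>R v a) + u"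
      using True by (simp add: T_def w_def)
    thus ?thesis using vk c True by simp
  next
    case False
    hence "(\<Sum>a<Suc k. T $$ (r,a) *\<^sub>R w a) = (\<Sum>a<Suc k. if a = r then v r else 0)"
      using r by (intro sum.cong) (auto simp: T_def w_def)
    thus ?thesis using r by simp
  qed
  have detT: "Determinant.det T = 1"
  proof -
    have "Determinant.det T = prod_list (diag_mat T)"
      by (rule det_lower_triangular[OF _ Tc]) (auto simp: T_def)
    also have "diag_mat T = map (\<lambda>_. 1) [0..<Suc k]"
      by (auto simp: diag_mat_def T_def)
    moreover have "prod_list (map (\<lambda>_. (1::real)) xs) = 1" for xs :: "nat list" by (induct xs) auto
    ultimately show ?thesis by metis
  qed
  have Gw: "gram (Suc k) w \<in> carrier_mat (Suc k) (Suc k)" by (simp add: gram_def)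
  have "Determinant.det (gram (Suc k) v) = Determinant.det (T * gram (Suc k) w * transpose_mat T)"
    by (subst gram_change[OF Tc vw]) auto
  also have "\<dots> = Determinant.det (gram (Suc k) w)"
    using Tc Gw by (simp add: det_mult[of _ "Suc k"] det_transpose detT)
  also have "\<dots> = (\<Sum>b<Suc k. gram (Suc k) w $$ (k,b) * cofactor (gram (Suc k) w) k b)"
    by (rule laplace_expansion_row[OF Gw]) simp
  also have "\<dots> = (\<Sum>b<Suc k. if b = k then (u \<bullet> u) * cofactor (gram (Suc k) w) k k else 0)"
    by (intro sum.cong) (auto simp: gram_def w_def uorth)
  also have "\<dots> = (u \<bullet> u) * Determinant.det (gram k v)"
  proof -
    have "mat_delete (gram (Suc k) w) k k = gram k v"
      by (rule eq_matI) (auto simp: mat_delete_def gram_def w_def)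
    thus ?thesis by (simp add: cofactor_def)
  qed
  finally show ?case using IH u0 by simp
qed



lemma Lsum:
  fixes f :: "nat \<Rightarrow> real"
  assumes r: "r < n" and n: "2 \<le> n"
  shows "(\<Sum>a<n. (if a = r then 1 else if 2 \<le> r \<and> a = 0 then q else if 2 \<le> r \<and> a = 1 then 1 else 0) * f a)
     = (if 2 \<le> r then f r + q * f 0 + f 1 else f r)"
proof (cases "2 \<le> r")
  case True
  have "(\<Sum>a<n. (if a = r then 1 else if 2 \<le> r \<and> a = 0 then q else if 2 \<le> r \<and> a = 1 then 1 else 0) * f a)
    = (\<Sum>a<n. (if a = r then f r else 0) + (if a = 0 then q * f 0 else 0) + (if a = 1 then f 1 else 0))"
    using True by (intro sum.cong) auto
  also have "\<dots> = f r + q * f 0 + f 1" using r n by (simp add: sum.distrib)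
  finally show ?thesis using True by simp
next
  case False
  have "(\<Sum>a<n. (if a = r then 1 else if 2 \<le> r \<and> a = 0 then q else if 2 \<le> r \<and> a = 1 then 1 else 0) * f a)
    = (\<Sum>a<n. (if a = r then f r else 0))"
    using False by (intro sum.cong) auto
  also have "\<dots> = f r" using r by simp
  finally show ?thesis using False by simp
qed

lemma dist_sq_vv:
  fixes a b c :: "'a::real_inner"
  shows "(dist a b)\<^sup>2 = (a - c) \<bullet> (a - c) + (b - c) \<bullet> (b - c) - 2 * ((a - c) \<bullet> (b - c))"
proof -
  have "a - b = (a - c) - (b - c)" by simp
  hence "(dist a b)\<^sup>2 = ((a - c) - (b - c)) \<bullet> ((a - c) - (b - c))"
    by (simp add: dist_norm power2_norm_eq_inner)
  thus ?thesis by (simp add: inner_diff inner_commute)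
qed

lemma cm_factor:
  fixes x :: "nat \<Rightarrow> 'a::euclidean_space" and j :: nat
  defines "vv \<equiv> \<lambda>r. x r - x 1"
  defines "L \<equiv> Matrix.mat (j+2) (j+2) (\<lambda>(r,a). if a = r then 1 else if 2 \<le> r \<and> a = 0 then inner (vv r) (vv r)
      else if 2 \<le> r \<and> a = 1 then 1 else (0::real))"
  defines "Bp \<equiv> Matrix.mat (j+2) (j+2) (\<lambda>(a,b). if (a = 0 \<and> b = 1) \<or> (a = 1 \<and> b = 0) then 1
      else if 2 \<le> a \<and> 2 \<le> b then -2 * (inner (vv a) (vv b)) else (0::real))"
  shows "cm_matrix j x = L * Bp * transpose_mat L"
proof (rule eq_matI)
  have Lc: "L \<in> carrier_mat (j+2) (j+2)" and Bc: "Bp \<in> carrier_mat (j+2) (j+2)"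
    unfolding L_def Bp_def by auto
  fix r s assume "r < dim_row (L * Bp * transpose_mat L)" "s < dim_col (L * Bp * transpose_mat L)"
  hence r: "r < j+2" and s: "s < j+2" using Lc by auto
  have Lrow: "(\<Sum>a<j+2. L $$ (t,a) * f a) = (if 2 \<le> t then f t + (inner (vv t) (vv t)) * f 0 + f 1 else f t)"
    if t: "t < j+2" for t and f :: "nat \<Rightarrow> real"
  proof -
    have "(\<Sum>a<j+2. L $$ (t,a) * f a) = (\<Sum>a<j+2. (if a = t then 1 else if 2 \<le> t \<and> a = 0 then inner (vv t) (vv t)
       else if 2 \<le> t \<and> a = 1 then 1 else 0) * f a)"
      using t by (intro sum.cong) (auto simp: L_def)
    also have "\<dots> = (if 2 \<le> t then f t + inner (vv t) (vv t) * f 0 + f 1 else f t)" by (rule Lsum[OF t]) simp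
    finally show ?thesis .
  qed
  define g where "g a = (if 2 \<le> s then Bp $$ (a,s) + inner (vv s) (vv s) * Bp $$ (a,0) + Bp $$ (a,1) else Bp $$ (a,s))" for a
  have inn: "(\<Sum>b<j+2. L $$ (s,b) * Bp $$ (a,b)) = g a" for a
    unfolding g_def by (rule Lrow[OF s])
  have "(L * Bp * transpose_mat L) $$ (r,s) = (\<Sum>a<j+2. L $$ (r,a) * (\<Sum>b<j+2. L $$ (s,b) * Bp $$ (a,b)))"
    by (subst triple_entry[OF Lc Bc Lc r s]) (simp add: mult.commute)
  also have "\<dots> = (\<Sum>a<j+2. L $$ (r,a) * g a)"
    by (simp only: inn)
  also have "\<dots> = (if 2 \<le> r then g r + inner (vv r) (vv r) * g 0 + g 1 else g r)"
    by (rule Lrow[OF r])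
  also have "\<dots> = cm_matrix j x $$ (r,s)"
    using r s by (cases "r = 0"; cases "r = 1"; cases "s = 0"; cases "s = 1") (auto simp: g_def Bp_def cm_entry vv_def dist_sq_vv[of _ _ "x 1"] dist_commute inner_commute)
  finally show "cm_matrix j x $$ (r,s) = (L * Bp * transpose_mat L) $$ (r,s)" by simp
qed (auto simp: cm_matrix_def L_def)



lemma det_swap2: "Determinant.det (Matrix.mat 2 2 (\<lambda>(a,b). if a = b then 0 else (1::real))) = -1"
proof -
  let ?A = "Matrix.mat 2 2 (\<lambda>(a,b). if a = b then 0 else (1::real))"
  have c: "?A \<in> carrier_mat 2 2" by auto
  have "Determinant.det ?A = (\<Sum>b<2. ?A $$ (0,b) * cofactor ?A 0 b)"
    by (rule laplace_expansion_row[OF c]) simp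
  also have "\<dots> = cofactor ?A 0 1" by (simp add: numeral_2_eq_2)
  also have "\<dots> = - Determinant.det (mat_delete ?A 0 1)" by (simp add: cofactor_def)
  also have "Determinant.det (mat_delete ?A 0 1) = mat_delete ?A 0 1 $$ (0,0)"
    by (rule det_single) (simp add: mat_delete_def)
  also have "\<dots> = 1" by (simp add: mat_delete_def)
  finally show ?thesis .
qed

lemma cm_det:
  fixes x :: "nat \<Rightarrow> 'a::euclidean_space" and j :: nat
  shows "Determinant.det (cm_matrix j x) = - ((-2) ^ j * Determinant.det (gram j (\<lambda>a. x (a+2) - x 1)))"
proof -
  define vv where "vv = (\<lambda>r. x r - x 1)"
  define L where "L = Matrix.mat (j+2) (j+2) (\<lambda>(r,a). if a = r then 1 else if 2 \<le> r \<and> a = 0 then inner (vv r) (vv r)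
      else if 2 \<le> r \<and> a = 1 then 1 else (0::real))"
  define Bp where "Bp = Matrix.mat (j+2) (j+2) (\<lambda>(a,b). if (a = 0 \<and> b = 1) \<or> (a = 1 \<and> b = 0) then 1
      else if 2 \<le> a \<and> 2 \<le> b then -2 * inner (vv a) (vv b) else (0::real))"
  have fac: "cm_matrix j x = L * Bp * transpose_mat L"
    unfolding L_def Bp_def vv_def by (rule cm_factor)
  have Lc: "L \<in> carrier_mat (j+2) (j+2)" and Bc: "Bp \<in> carrier_mat (j+2) (j+2)"
    unfolding L_def Bp_def by auto
  have detL: "Determinant.det L = 1"
  proof -
    have "Determinant.det L = prod_list (diag_mat L)"
      by (rule det_lower_triangular[OF _ Lc]) (auto simp: L_def)
    also have "diag_mat L = map (\<lambda>_. 1) [0..<j+2]"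
      by (auto simp: diag_mat_def L_def)
    moreover have "prod_list (map (\<lambda>_. (1::real)) xs) = 1" for xs :: "nat list" by (induct xs) auto
    ultimately show ?thesis by metis
  qed
  let ?A2 = "Matrix.mat 2 2 (\<lambda>(a,b). if a = b then 0 else (1::real))"
  let ?G = "gram j (\<lambda>a. x (a+2) - x 1)"
  have Bfb: "Bp = four_block_mat ?A2 (0\<^sub>m 2 j) (0\<^sub>m j 2) ((-2) \<cdot>\<^sub>m ?G)"
  proof -
    have ss: "\<And>i::nat. \<not> i < 2 \<Longrightarrow> Suc (Suc (i - 2)) = i" by arith
    show ?thesis by (rule eq_matI) (auto simp: Bp_def four_block_mat_def gram_def vv_def ss)
  qed
  have "Determinant.det (cm_matrix j x) = Determinant.det Bp"
    unfolding fac using Lc Bc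
    by (simp add: det_mult[of _ "j+2"] det_transpose detL)
  also have "\<dots> = Determinant.det ?A2 * Determinant.det ((-2) \<cdot>\<^sub>m ?G)"
    unfolding Bfb by (rule det_four_block_mat_upper_right_zero) (auto simp: gram_def)
  also have "\<dots> = - ((-2) ^ j * Determinant.det ?G)"
    by (simp add: det_swap2 gram_def)
  finally show ?thesis .
qed



lemma sum_shift1: "(\<Sum>s\<in>{1..j+1}. f s) = f 1 + (\<Sum>a<j. f (a+2::nat))"
  for f :: "nat \<Rightarrow> 'b::comm_monoid_add"
  by (induction j) (simp_all add: atLeastAtMostSuc_conv add_ac)

lemma affine_indep_imp_indep:
  fixes x :: "nat \<Rightarrow> 'a::euclidean_space"
  assumes inj: "inj_on x {1..j+1}" and nd: "\<not> affine_dependent (x ` {1..j+1})"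
  shows "indep j (\<lambda>a. x (a+2) - x 1)"
  unfolding indep_def
proof (intro allI impI, rule ccontr)
  fix z a0
  assume sz: "(\<Sum>a<j. z a *\<^sub>R (x (a+2) - x 1)) = 0" and a0j: "a0 < j" and "\<not> z a0 = 0"
  hence a0: "a0 < j" "z a0 \<noteq> 0" by auto
  let ?I = "{1..j+1}"
  define g where "g s = (if s = 1 then - (\<Sum>a<j. z a) else z (s - 2))" for s
  define U where "U w = g (inv_into ?I x w)" for w
  have Ux: "s \<in> ?I \<Longrightarrow> U (x s) = g s" for s unfolding U_def using inj by simp
  have "sum U (x ` ?I) = (\<Sum>s\<in>?I. g s)"
    using inj Ux by (simp add: sum.reindex)
  also have "\<dots> = 0" unfolding sum_shift1 by (simp add: g_def)
  finally have s1: "sum U (x ` ?I) = 0" .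
  have "(\<Sum>w\<in>x ` ?I. U w *\<^sub>R w) = (\<Sum>s\<in>?I. g s *\<^sub>R x s)"
    using inj Ux by (simp add: sum.reindex)
  also have "\<dots> = (\<Sum>a<j. z a *\<^sub>R (x (a+2) - x 1))"
    unfolding sum_shift1 by (simp add: g_def scaleR_diff_right sum_subtractf scaleR_sum_left)
  also have "\<dots> = 0" by (rule sz)
  finally have s2: "(\<Sum>w\<in>x ` ?I. U w *\<^sub>R w) = 0" .
  have s3: "\<exists>w\<in>x ` ?I. U w \<noteq> 0"
    using a0 Ux[of "a0+2"] by (intro bexI[of _ "x (a0+2)"]) (auto simp: g_def)
  have "affine_dependent (x ` ?I)"
    using s1 s2 s3 by (subst affine_dependent_explicit_finite) auto
  thus False using nd by simp
qed

lemma cm_pos: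
  fixes x :: "nat \<Rightarrow> 'a::euclidean_space"
  assumes "1 \<le> j" and "inj_on x {1..j+1}" and "\<not> affine_dependent (x ` {1..j+1})"
  shows "(-1) ^ (j+1) * Determinant.det (cm_matrix j x) > 0"
proof -
  have G: "Determinant.det (gram j (\<lambda>a. x (a+2) - x 1)) > 0"
    by (rule gram_pos[OF affine_indep_imp_indep[OF assms(2,3)]])
  have "(-1) ^ (j+1) * Determinant.det (cm_matrix j x) = 2 ^ j * Determinant.det (gram j (\<lambda>a. x (a+2) - x 1))"
  proof -
    have m2: "(-2::real)^j = (-1)^j * 2^j" by (simp add: power_mult_distrib[symmetric])
    have m1: "(-1::real)^j * (-1)^j = 1" by (simp add: power_mult_distrib[symmetric])
    have e: "(-1::real)^(j+1) * - ((-1)^j * 2^j * D) = ((-1)^j * (-1)^j) * (2^j * D)" for D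
      by (simp add: mult.assoc)
    show ?thesis unfolding cm_det m2 e m1 by simp
  qed
  thus ?thesis using G by simp
qed

lemma det_cm_deriv:
  fixes x :: "nat \<Rightarrow> 'a::euclidean_space"
  assumes p: "p \<in> {1..j+1}"
  shows "((\<lambda>y. Determinant.det (cm_matrix j (x(p := y)))) has_derivative
    (\<lambda>h. 2 * (\<Sum>m\<in>{1..j+1} - {p}. cofactor (cm_matrix j x) m p * (2 * ((x p - x m) \<bullet> h))))) (at (x p))"
proof -
  let ?S = "{1..j+1} - {p}"
  let ?M = "cm_matrix j x"
  define e' where "e' r c h = (if r = p \<and> c \<in> ?S then 2 * ((x p - x c) \<bullet> h) else 0)
        + (if c = p \<and> r \<in> ?S then 2 * ((x p - x r) \<bullet> h) else 0)" for r c h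
  have 1: "((\<lambda>y. Determinant.det (cm_matrix j (x(p := y)))) has_derivative
     (\<lambda>h. \<Sum>r<j+2. \<Sum>c<j+2. e' r c h * cofactor (cm_matrix j (x(p := x p))) r c)) (at (x p))"
    by (rule det_has_derivative[OF cm_carrier]) (unfold e'_def, rule cm_entry_deriv[OF _ _ p])
  have pn: "p < j+2" and Sn: "?S \<subseteq> {..<j+2}" using p by auto
  have 2: "(\<Sum>r<j+2. \<Sum>c<j+2. e' r c h * cofactor ?M r c) =
     2 * (\<Sum>m\<in>?S. cofactor ?M m p * (2 * ((x p - x m) \<bullet> h)))" for h
  proof -
    have "(\<Sum>r<j+2. \<Sum>c<j+2. e' r c h * cofactor ?M r c) =
       (\<Sum>r<j+2. \<Sum>c<j+2. (if r = p \<and> c \<in> ?S then 2 * ((x p - x c) \<bullet> h) * cofactor ?M p c else 0))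
     + (\<Sum>c<j+2. \<Sum>r<j+2. (if c = p \<and> r \<in> ?S then 2 * ((x p - x r) \<bullet> h) * cofactor ?M r p else 0))"
    proof -
      have eA: "e' r c h * cofactor ?M r c = (if r = p \<and> c \<in> ?S then 2 * ((x p - x c) \<bullet> h) * cofactor ?M p c else 0)
        + (if c = p \<and> r \<in> ?S then 2 * ((x p - x r) \<bullet> h) * cofactor ?M r p else 0)" for r c
        by (simp add: e'_def distrib_right)
      have sw: "(\<Sum>r<j+2. \<Sum>c<j+2. (if c = p \<and> r \<in> ?S then 2 * ((x p - x r) \<bullet> h) * cofactor ?M r p else 0))
        = (\<Sum>c<j+2. \<Sum>r<j+2. (if c = p \<and> r \<in> ?S then 2 * ((x p - x r) \<bullet> h) * cofactor ?M r p else 0))"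
        by (rule sum.swap)
      show ?thesis by (simp only: eA sum.distrib sw)
    qed
    also have "\<dots> = (\<Sum>m\<in>?S. 2 * ((x p - x m) \<bullet> h) * cofactor ?M p m)
       + (\<Sum>m\<in>?S. 2 * ((x p - x m) \<bullet> h) * cofactor ?M m p)"
      by (simp only: double_sum_delta[OF pn Sn])
    also have "\<dots> = 2 * (\<Sum>m\<in>?S. cofactor ?M m p * (2 * ((x p - x m) \<bullet> h)))"
      using cofactor_sym[OF cm_carrier cm_sym, of j x p]
      by (simp add: sum.distrib[symmetric] sum_distrib_left mult_ac)
    finally show ?thesis .
  qed
  show ?thesis using 1 unfolding fun_upd_triv 2 .
qed

theorem lemma1:
  fixes x :: "nat \<Rightarrow> 'a::euclidean_space" and j p :: nat
  assumes "1 \<le> j" and "j \<le> DIM('a)"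
    and "inj_on x {1..j+1}" and "\<not> affine_dependent (x ` {1..j+1})"
    and "p \<in> {1..j+1}"
  shows "((\<lambda>y. distortion j (x(p := y))) has_derivative
          (\<lambda>h. ((((-1) ^ (j+1) / 2 ^ j) / distortion j x) *\<^sub>R
                  (\<Sum>m\<in>{1..j+1} - {p}.
                     adj_mat (cm_matrix j x) $$ (p, m) *\<^sub>R (2 *\<^sub>R (x p - x m)))) \<bullet> h))
         (at (x p))"
proof -
  let ?S = "{1..j+1} - {p}"
  let ?M = "cm_matrix j x"
  define K :: real where "K = (-1) ^ (j+1) / (2 ^ j * (fact j)\<^sup>2)"
  define T where "T h = (\<Sum>m\<in>?S. cofactor ?M m p * (2 * ((x p - x m) \<bullet> h)))" for h
  have pos: "0 < K * Determinant.det ?M"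
    using cm_pos[OF assms(1,3,4)] unfolding K_def
    by (simp add: mult.commute[of _ "Determinant.det _"] mult.assoc[symmetric] divide_simps)
  have d: "((\<lambda>y. K * Determinant.det (cm_matrix j (x(p := y)))) has_derivative
      (\<lambda>h. K * (2 * T h))) (at (x p))"
    unfolding T_def by (intro has_derivative_mult_right det_cm_deriv assms(5))
  have d2: "((\<lambda>y. fact j * sqrt (K * Determinant.det (cm_matrix j (x(p := y))))) has_derivative
      (\<lambda>h. fact j * (K * (2 * T h) * (inverse (sqrt (K * Determinant.det ?M)) / 2)))) (at (x p))"
    apply (intro has_derivative_mult_right)
    using DERIV_real_sqrt[of "K * Determinant.det (cm_matrix j (x(p := x p)))"] pos
    by (intro DERIV_compose_FDERIV[OF _ d]) simp
  have eq: "(\<lambda>h. fact j * (K * (2 * T h) * (inverse (sqrt (K * Determinant.det ?M)) / 2))) =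
     (\<lambda>h. ((((-1) ^ (j+1) / 2 ^ j) / distortion j x) *\<^sub>R
                  (\<Sum>m\<in>?S. adj_mat ?M $$ (p, m) *\<^sub>R (2 *\<^sub>R (x p - x m)))) \<bullet> h)"
  proof
    fix h
    have adj: "m \<in> ?S \<Longrightarrow> adj_mat ?M $$ (p, m) = cofactor ?M m p" for m
      using assms(5) by (simp add: adj_mat_def cm_matrix_def)
    have "(\<Sum>m\<in>?S. adj_mat ?M $$ (p, m) *\<^sub>R (2 *\<^sub>R (x p - x m))) \<bullet> h = T h"
      unfolding T_def inner_sum_left by (intro sum.cong) (auto simp: adj)
    moreover have "sqrt (K * Determinant.det ?M) > 0" using pos by simp
    moreover have "distortion j x = fact j * sqrt (K * Determinant.det ?M)"
      unfolding distortion_def simplex_content_def K_def ..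
    ultimately show "fact j * (K * (2 * T h) * (inverse (sqrt (K * Determinant.det ?M)) / 2)) =
     ((((-1) ^ (j+1) / 2 ^ j) / distortion j x) *\<^sub>R
                  (\<Sum>m\<in>?S. adj_mat ?M $$ (p, m) *\<^sub>R (2 *\<^sub>R (x p - x m)))) \<bullet> h"
      by (simp add: K_def field_simps power2_eq_square)
  qed
  have fe: "(\<lambda>y. distortion j (x(p := y))) = (\<lambda>y. fact j * sqrt (K * Determinant.det (cm_matrix j (x(p := y)))))"
    unfolding distortion_def simplex_content_def K_def ..
  show ?thesis unfolding fe using d2[unfolded eq] .
qed

end
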